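(* Let $A\in\{0,1\}^{m\times m}$, $B\in\{0,1\}^{n\times n}$ be non-degenerate, $\varphi:X_A\to X_B$ an elementary conjugacy and $R_\varphi$ as defined below. For $a\in\{1,\dots,m\}$, $b\in\{1,\dots,n\}$ the following are equivalent: (i) $(R_\varphi)_{a,b}=1$; (ii) there is $a'$ with $\varphi_{\mathrm{loc}}(a,a')=b$; (iii) there is $b'$ with $\varphi^{-1}_{\mathrm{loc}}(b',b)=a$; (iv) there are $x\in X_A$, $y\in X_B$ with $x_0=a$, $y_0=b$ and $y=\varphi(x)$.
   Context: Non-degenerate: no zero rows or columns. $X_A=\{x\in\{1,\dots,m\}^{\mathbb Z}:A_{x_\ell,x_{\ell+1}}=1\ \forall\ell\}$ with the left shift; a conjugacy is a shift-commuting homeomorphism. $\varphi:X_A\to X_B$ is elementary if there are $\varphi_{\mathrm{loc}}$ (on pairs $(a,a')$ with $A_{a,a'}=1$) and $\varphi^{-1}_{\mathrm{loc}}$ (on pairs $(b,b')$ with $B_{b,b'}=1$) with $\varphi(x)_i=\varphi_{\mathrm{loc}}(x_i,x_{i+1})$ and $\varphi^{-1}(y)_i=\varphi^{-1}_{\mathrm{loc}}(y_{i-1},y_i)$ for all $x,y,i$. $R_\varphi\in\{0,1\}^{m\times n}$ is defined by $(R_\varphi)_{a,b}=1$ iff there is $a'$ with $A_{a,a'}=1$ and $\varphi_{\mathrm{loc}}(a,a')=b$. Existential quantifiers over pairs range over allowed pairs. *)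

theory Defs
  imports "HOL-Analysis.Analysis"
begin

text \<open>Square 0-1 matrices of size m are functions nat => nat => nat; only the
entries with indices in {1..m} are relevant.  Points of the shift space are
functions int => nat (bi-infinite sequences), carrying the product topology
of the discrete space nat.\<close>

definition zero_one_matrix :: "nat \<Rightarrow> (nat \<Rightarrow> nat \<Rightarrow> nat) \<Rightarrow> bool" where
  "zero_one_matrix m A \<longleftrightarrow> (\<forall>i\<in>{1..m}. \<forall>j\<in>{1..m}. A i j \<in> {0, 1})"

definition nondegenerate :: "nat \<Rightarrow> (nat \<Rightarrow> nat \<Rightarrow> nat) \<Rightarrow> bool" where
  "nondegenerate m A \<longleftrightarrow>
     (\<forall>i\<in>{1..m}. \<exists>j\<in>{1..m}. A i j = 1) \<and> (\<forall>j\<in>{1..m}. \<exists>i\<in>{1..m}. A i j = 1)"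

definition allowed :: "nat \<Rightarrow> (nat \<Rightarrow> nat \<Rightarrow> nat) \<Rightarrow> nat \<Rightarrow> nat \<Rightarrow> bool" where
  "allowed m A a a' \<longleftrightarrow> a \<in> {1..m} \<and> a' \<in> {1..m} \<and> A a a' = 1"

definition shift_space :: "nat \<Rightarrow> (nat \<Rightarrow> nat \<Rightarrow> nat) \<Rightarrow> (int \<Rightarrow> nat) set" where
  "shift_space m A = {x. \<forall>l. allowed m A (x l) (x (l + 1))}"

definition shift :: "(int \<Rightarrow> nat) \<Rightarrow> (int \<Rightarrow> nat)" where
  "shift x = (\<lambda>i. x (i + 1))"

definition conjugacy ::
  "nat \<Rightarrow> (nat \<Rightarrow> nat \<Rightarrow> nat) \<Rightarrow> nat \<Rightarrow> (nat \<Rightarrow> nat \<Rightarrow> nat) \<Rightarrow> ((int \<Rightarrow> nat) \<Rightarrow> (int \<Rightarrow> nat)) \<Rightarrow> bool" where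
  "conjugacy m A n B \<phi> \<longleftrightarrow>
     (\<exists>\<psi>. homeomorphism (shift_space m A) (shift_space n B) \<phi> \<psi>) \<and>
     (\<forall>x\<in>shift_space m A. \<phi> (shift x) = shift (\<phi> x))"

definition elementary_conjugacy ::
  "nat \<Rightarrow> (nat \<Rightarrow> nat \<Rightarrow> nat) \<Rightarrow> nat \<Rightarrow> (nat \<Rightarrow> nat \<Rightarrow> nat) \<Rightarrow> ((int \<Rightarrow> nat) \<Rightarrow> (int \<Rightarrow> nat))
    \<Rightarrow> (nat \<Rightarrow> nat \<Rightarrow> nat) \<Rightarrow> (nat \<Rightarrow> nat \<Rightarrow> nat) \<Rightarrow> bool" where
  "elementary_conjugacy m A n B \<phi> \<phi>loc \<phi>invloc \<longleftrightarrow>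
     conjugacy m A n B \<phi> \<and>
     (\<forall>x\<in>shift_space m A. \<forall>i. \<phi> x i = \<phi>loc (x i) (x (i + 1))) \<and>
     (\<forall>y\<in>shift_space n B. \<forall>i. inv_into (shift_space m A) \<phi> y i = \<phi>invloc (y (i - 1)) (y i))"

definition R_matrix :: "nat \<Rightarrow> (nat \<Rightarrow> nat \<Rightarrow> nat) \<Rightarrow> (nat \<Rightarrow> nat \<Rightarrow> nat) \<Rightarrow> nat \<Rightarrow> nat \<Rightarrow> nat" where
  "R_matrix m A \<phi>loc a b = (if \<exists>a'. allowed m A a a' \<and> \<phi>loc a a' = b then 1 else 0)"

end

theory Submission
  imports Defs
begin

lemma path_exists:
  assumes nd: "nondegenerate m A" and al: "allowed m A a a'"
  shows "\<exists>x\<in>shift_space m A. x 0 = a \<and> x 1 = a'"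
proof -
  define sc where "sc i = (SOME j. allowed m A i j)" for i
  define pr where "pr j = (SOME i. allowed m A i j)" for j
  have sc: "allowed m A i (sc i)" if "i \<in> {1..m}" for i
    unfolding sc_def by (rule someI_ex) (use nd that in \<open>fastforce simp: nondegenerate_def allowed_def\<close>)
  have pr: "allowed m A (pr j) j" if "j \<in> {1..m}" for j
    unfolding pr_def by (rule someI_ex) (use nd that in \<open>fastforce simp: nondegenerate_def allowed_def\<close>)
  have a: "a \<in> {1..m}" and a': "a' \<in> {1..m}" using al by (auto simp: allowed_def)
  have scm: "(sc ^^ k) a' \<in> {1..m}" for k
    by (induction k) (use a' sc in \<open>auto simp: allowed_def\<close>)
  have prm: "(pr ^^ k) a \<in> {1..m}" for k
    by (induction k) (use a pr in \<open>auto simp: allowed_def\<close>)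
  define x where "x k = (if k \<ge> 1 then (sc ^^ nat (k - 1)) a' else (pr ^^ nat (-k)) a)" for k :: int
  have "allowed m A (x l) (x (l + 1))" for l
  proof (cases "l \<ge> 1")
    case True
    then have "nat (l + 1 - 1) = Suc (nat (l - 1))" by simp
    then show ?thesis using True sc[OF scm[of "nat (l - 1)"]] by (simp add: x_def)
  next
    case False
    show ?thesis
    proof (cases "l = 0")
      case True then show ?thesis using al by (simp add: x_def)
    next
      case False': False
      with False have "nat (-l) = Suc (nat (-(l+1)))" "\<not> (l + 1 \<ge> 1)" by auto
      then show ?thesis using False pr[OF prm[of "nat (-(l+1))"]] by (simp add: x_def)
    qed
  qed
  then have "x \<in> shift_space m A" by (simp add: shift_space_def)
  moreover have "x 0 = a" "x 1 = a'" by (simp_all add: x_def)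
  ultimately show ?thesis by blast
qed

theorem mainTheorem10:
  fixes m n :: nat and A B :: "nat \<Rightarrow> nat \<Rightarrow> nat"
    and \<phi> :: "(int \<Rightarrow> nat) \<Rightarrow> (int \<Rightarrow> nat)" and \<phi>loc \<phi>invloc :: "nat \<Rightarrow> nat \<Rightarrow> nat"
    and a b :: nat
  assumes "zero_one_matrix m A" and "zero_one_matrix n B"
    and "nondegenerate m A" and "nondegenerate n B"
    and "elementary_conjugacy m A n B \<phi> \<phi>loc \<phi>invloc"
    and "a \<in> {1..m}" and "b \<in> {1..n}"
  shows "(R_matrix m A \<phi>loc a b = 1 \<longleftrightarrow> (\<exists>a'. allowed m A a a' \<and> \<phi>loc a a' = b))
       \<and> ((\<exists>a'. allowed m A a a' \<and> \<phi>loc a a' = b) \<longleftrightarrow> (\<exists>b'. allowed n B b' b \<and> \<phi>invloc b' b = a))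
       \<and> ((\<exists>b'. allowed n B b' b \<and> \<phi>invloc b' b = a) \<longleftrightarrow>
            (\<exists>x\<in>shift_space m A. \<exists>y\<in>shift_space n B. x 0 = a \<and> y 0 = b \<and> y = \<phi> x))"
proof -
  let ?X = "shift_space m A" and ?Y = "shift_space n B"
  obtain \<psi> where h: "homeomorphism ?X ?Y \<phi> \<psi>"
    using assms(5) by (auto simp: elementary_conjugacy_def conjugacy_def)
  have loc: "\<And>x i. x \<in> ?X \<Longrightarrow> \<phi> x i = \<phi>loc (x i) (x (i + 1))"
    and invloc: "\<And>y i. y \<in> ?Y \<Longrightarrow> inv_into ?X \<phi> y i = \<phi>invloc (y (i - 1)) (y i)"
    using assms(5) by (auto simp: elementary_conjugacy_def)
  have img: "\<phi> ` ?X = ?Y" using h by (simp add: homeomorphism_def)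
  have inj: "inj_on \<phi> ?X" using h by (metis homeomorphism_apply1 inj_on_inverseI)
  have R: "R_matrix m A \<phi>loc a b = 1 \<longleftrightarrow> (\<exists>a'. allowed m A a a' \<and> \<phi>loc a a' = b)"
    by (simp add: R_matrix_def)
  have ii_iv: "\<exists>x\<in>?X. \<exists>y\<in>?Y. x 0 = a \<and> y 0 = b \<and> y = \<phi> x"
    if h1: "allowed m A a a'" and h2: "\<phi>loc a a' = b" for a'
  proof -
    obtain x where x: "x \<in> ?X" "x 0 = a" "x 1 = a'" using path_exists[OF assms(3) h1] by blast
    have "\<phi> x 0 = b" using loc[OF x(1), of 0] x h2 by simp
    then show ?thesis using x img by blast
  qed
  have iv_ii: "\<exists>a'. allowed m A a a' \<and> \<phi>loc a a' = b"
    if "x \<in> ?X" "x 0 = a" "\<phi> x 0 = b" for x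
  proof -
    have "allowed m A (x 0) (x (0 + 1))" using that(1) unfolding shift_space_def by blast
    then show ?thesis using that loc[OF that(1), of 0] by auto
  qed
  have iii_iv: "\<exists>x\<in>?X. \<exists>y\<in>?Y. x 0 = a \<and> y 0 = b \<and> y = \<phi> x"
    if h1: "allowed n B b' b" and h2: "\<phi>invloc b' b = a" for b'
  proof -
    obtain z where z: "z \<in> ?Y" "z 0 = b'" "z 1 = b" using path_exists[OF assms(4) h1] by blast
    define y where "y i = z (i + 1)" for i
    have y: "y \<in> ?Y"
    proof -
      have "allowed n B (y l) (y (l + 1))" for l
      proof -
        have "allowed n B (z (l + 1)) (z ((l + 1) + 1))" using z(1) unfolding shift_space_def by blast
        then show ?thesis unfolding y_def .
      qed
      then show ?thesis unfolding shift_space_def by blast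
    qed
    define x where "x = inv_into ?X \<phi> y"
    have xX: "x \<in> ?X" unfolding x_def by (rule inv_into_into) (simp add: img y)
    have xy: "\<phi> x = y" unfolding x_def using f_inv_into_f[of y \<phi> ?X] img y by simp
    have "x 0 = a" unfolding x_def using invloc[OF y, of 0] z h2 by (simp add: y_def)
    moreover have "y 0 = b" using z by (simp add: y_def)
    ultimately show ?thesis using xX xy y by blast
  qed
  have iv_iii: "\<exists>b'. allowed n B b' b \<and> \<phi>invloc b' b = a"
    if "x \<in> ?X" "x 0 = a" "\<phi> x 0 = b" for x
  proof -
    have y: "\<phi> x \<in> ?Y" using that img by blast
    have "inv_into ?X \<phi> (\<phi> x) = x" using inv_into_f_f[OF inj that(1)] .
    then have "\<phi>invloc (\<phi> x (-1)) b = a" using invloc[OF y, of 0] that by simp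
    moreover have "allowed n B (\<phi> x (-1)) (\<phi> x (-1 + 1))" using y unfolding shift_space_def by blast
    then have "allowed n B (\<phi> x (-1)) b" using that(3) by simp
    ultimately show ?thesis by blast
  qed
  have e1: "(\<exists>a'. allowed m A a a' \<and> \<phi>loc a a' = b) \<longleftrightarrow> (\<exists>x\<in>?X. \<exists>y\<in>?Y. x 0 = a \<and> y 0 = b \<and> y = \<phi> x)"
    using ii_iv iv_ii by blast
  have e2: "(\<exists>b'. allowed n B b' b \<and> \<phi>invloc b' b = a) \<longleftrightarrow> (\<exists>x\<in>?X. \<exists>y\<in>?Y. x 0 = a \<and> y 0 = b \<and> y = \<phi> x)"
    using iii_iv iv_iii by blast
  show ?thesis using R e1 e2 by simp
qed

end
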